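(* Fix $Z_1,\ldots,Z_n$, $X_{n+1}$, a level $\tilde\alpha\in[0,1]$, and $\alpha\in(0,1)$, and let $V$ be a fixed score function. For $y\in\mathbb R$ set $V_{n+1}=V(X_{n+1},y)$, $v^*_i=Q\big(\tilde\alpha;\sum_{j=1}^np^H_{i,j}\delta_{V_j}+p^H_{i,n+1}\delta_{V_{n+1}}\big)$ for $i=1,\ldots,n+1$, and $$\hat\alpha(y)=\sum_{i=1}^{n+1}\frac{w(X_i)}{\sum_{j=1}^{n+1}w(X_j)}\mathbb 1\{V_i\le v^*_i\}.$$ Let $\bar v^*=Q(\tilde\alpha;\hat{\mathcal F})$, $v^*_{i1}=Q(\tilde\alpha;\sum_{j=1}^np^H_{i,j}\delta_{V_j}+p^H_{i,n+1}\delta_{\bar v^*})$ and $v^*_{i2}=Q(\tilde\alpha;\sum_{j=1}^np^H_{i,j}\delta_{V_j}+p^H_{i,n+1}\delta_0)$, $i=1,\ldots,n$. If $$\sum_{i=1}^n\frac{w(X_i)}{\sum_{j=1}^{n+1}w(X_j)}\mathbb 1\{V_i\le v^*_{i1}\}\ge\alpha\quad\text{and}\quad\sum_{i=1}^n\frac{w(X_i)}{\sum_{j=1}^{n+1}w(X_j)}\mathbb 1\{V_i\le v^*_{i2}\}+\frac{w(X_{n+1})}{\sum_{j=1}^{n+1}w(X_j)}\ge\alpha,$$ then $\inf_{y\in\mathbb R}\hat\alpha(y)\ge\alpha$.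
   Context: $w:\mathbb R^p\to(0,\infty)$ is a given weight function (the density ratio $d\tilde P_X/dP_X$ in the covariate-shift setting; $w\equiv1$ in the i.i.d. setting). $X=\{X_1,\ldots,X_{n+1}\}$ (unordered). A localizer is a function $H(x_1,x_2,X)\in[0,1]$ of $x_1,x_2\in\mathbb R^p$ and of the unordered set $X$, with $H(x,x,X)=1$; $H_{i,j}=H(X_i,X_j,X)$, $p^H_{i,j}=H_{i,j}/\sum_{k=1}^{n+1}H_{i,k}$. A fixed score function is a deterministic measurable $V:\mathbb R^p\times\mathbb R\to[0,\infty)$; $V_i=V(Z_i)$ for $i\le n$. $\hat{\mathcal F}=\sum_{j=1}^{n}p^H_{n+1,j}\delta_{V_j}+p^H_{n+1,n+1}\delta_{\infty}$; $\delta_v$ is the point mass at $v$. For a probability distribution $\mathcal F$ on $\mathbb R\cup\{\infty\}$ and $a\in[0,1]$, $Q(a;\mathcal F)=\inf\{t:\mathbb P_{T\sim\mathcal F}(T\le t)\ge a\}$. *)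

theory Defs
  imports "HOL-Analysis.Analysis" "HOL-Library.Multiset" "HOL-Library.Extended_Real"
begin

text \<open>Q(a; F) for a finite discrete distribution F = sum over j in I of p j times the point
  mass at v j, on the extended reals (so that a point mass at infinity is allowed):
  Q(a;F) = inf of all t with P(T <= t) >= a.\<close>
definition wquantile :: "real \<Rightarrow> ('i \<Rightarrow> real) \<Rightarrow> ('i \<Rightarrow> ereal) \<Rightarrow> 'i set \<Rightarrow> ereal" where
  "wquantile a p v I = Inf {t :: ereal. (\<Sum>j\<in>I. if v j \<le> t then p j else 0) \<ge> a}"

definition sampleX :: "nat \<Rightarrow> (nat \<Rightarrow> 'x) \<Rightarrow> 'x multiset" where
  "sampleX n X = image_mset X (mset_set {1..Suc n})"

definition pH :: "('x \<Rightarrow> 'x \<Rightarrow> 'x multiset \<Rightarrow> real) \<Rightarrow> nat \<Rightarrow> (nat \<Rightarrow> 'x) \<Rightarrow> nat \<Rightarrow> nat \<Rightarrow> real" where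
  "pH H n X i j = H (X i) (X j) (sampleX n X) / (\<Sum>k\<in>{1..Suc n}. H (X i) (X k) (sampleX n X))"

definition alpha_hat ::
  "('x \<Rightarrow> real) \<Rightarrow> ('x \<Rightarrow> 'x \<Rightarrow> 'x multiset \<Rightarrow> real) \<Rightarrow> ('x \<times> real \<Rightarrow> real)
   \<Rightarrow> nat \<Rightarrow> (nat \<Rightarrow> 'x) \<Rightarrow> (nat \<Rightarrow> real) \<Rightarrow> real \<Rightarrow> real \<Rightarrow> real" where
  "alpha_hat w H V n X Y alpha_t y =
     (let S = (\<lambda>j. if j \<le> n then V (X j, Y j) else V (X (Suc n), y));
          vstar = (\<lambda>i. wquantile alpha_t (pH H n X i) (\<lambda>j. ereal (S j)) {1..Suc n})
      in (\<Sum>i\<in>{1..Suc n}. w (X i) / (\<Sum>j\<in>{1..Suc n}. w (X j)) *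
            (if ereal (S i) \<le> vstar i then 1 else 0)))"

end

theory Submission
  imports Defs
begin

lemma wq_mono:
  assumes "finite I" "\<And>j. j \<in> I \<Longrightarrow> p j \<ge> 0" "\<And>j. j \<in> I \<Longrightarrow> v j \<le> v' j"
  shows "wquantile a p v I \<le> wquantile a p v' I"
  unfolding wquantile_def
proof (rule Inf_superset_mono, safe)
  fix t :: ereal assume h: "a \<le> (\<Sum>j\<in>I. if v' j \<le> t then p j else 0)"
  have "(\<Sum>j\<in>I. if v' j \<le> t then p j else 0) \<le> (\<Sum>j\<in>I. if v j \<le> t then p j else 0)"
    apply (rule sum_mono) using assms order_trans by fastforce
  with h show "a \<le> (\<Sum>j\<in>I. if v j \<le> t then p j else 0)" by linarith
qed

lemma wq_inf:
  fixes e :: "nat \<Rightarrow> ereal"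
  assumes "ereal u > wquantile a p (\<lambda>j. if j \<le> n then e j else ereal u) {1..Suc n}"
  shows "wquantile a p (\<lambda>j. if j \<le> n then e j else \<infinity>) {1..Suc n} \<le> ereal u"
proof -
  from assms obtain t where t: "t < ereal u"
    "a \<le> (\<Sum>j\<in>{1..Suc n}. if (if j \<le> n then e j else ereal u) \<le> t then p j else 0)"
    unfolding wquantile_def by (auto simp: Inf_less_iff)
  have "(\<Sum>j\<in>{1..Suc n}. if (if j \<le> n then e j else ereal u) \<le> t then p j else 0)
      = (\<Sum>j\<in>{1..Suc n}. if (if j \<le> n then e j else \<infinity>) \<le> t then p j else 0)"
    apply (rule sum.cong) using t(1) by auto
  with t have "t \<in> {t. a \<le> (\<Sum>j\<in>{1..Suc n}. if (if j \<le> n then e j else \<infinity>) \<le> t then p j else 0)}"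
    by simp
  hence "wquantile a p (\<lambda>j. if j \<le> n then e j else \<infinity>) {1..Suc n} \<le> t"
    unfolding wquantile_def by (rule Inf_lower)
  with t(1) show ?thesis by simp
qed

theorem lemma3:
  fixes n :: nat
    and X :: "nat \<Rightarrow> real ^ 'p"
    and Y :: "nat \<Rightarrow> real"
    and w :: "real ^ 'p \<Rightarrow> real"
    and H :: "real ^ 'p \<Rightarrow> real ^ 'p \<Rightarrow> (real ^ 'p) multiset \<Rightarrow> real"
    and V :: "(real ^ 'p) \<times> real \<Rightarrow> real"
    and alpha_t \<alpha> :: real
  assumes w_pos: "\<And>x. w x > 0"
    and H_range: "\<And>x1 x2 M. 0 \<le> H x1 x2 M \<and> H x1 x2 M \<le> 1"
    and H_diag: "\<And>x M. H x x M = 1"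
    and V_meas: "V \<in> borel_measurable borel"
    and V_nonneg: "\<And>z. V z \<ge> 0"
    and at_range: "0 \<le> alpha_t" "alpha_t \<le> 1"
    and alpha_range: "0 < \<alpha>" "\<alpha> < 1"
    and cond1: "let Vs = (\<lambda>j. V (X j, Y j));
                    vbar = wquantile alpha_t (pH H n X (Suc n))
                             (\<lambda>j. if j \<le> n then ereal (Vs j) else \<infinity>) {1..Suc n};
                    v1 = (\<lambda>i. wquantile alpha_t (pH H n X i)
                             (\<lambda>j. if j \<le> n then ereal (Vs j) else vbar) {1..Suc n})
                in (\<Sum>i\<in>{1..n}. w (X i) / (\<Sum>j\<in>{1..Suc n}. w (X j)) *
                       (if ereal (Vs i) \<le> v1 i then 1 else 0)) \<ge> \<alpha>"
    and cond2: "let Vs = (\<lambda>j. V (X j, Y j));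
                    v2 = (\<lambda>i. wquantile alpha_t (pH H n X i)
                             (\<lambda>j. if j \<le> n then ereal (Vs j) else 0) {1..Suc n})
                in (\<Sum>i\<in>{1..n}. w (X i) / (\<Sum>j\<in>{1..Suc n}. w (X j)) *
                       (if ereal (Vs i) \<le> v2 i then 1 else 0))
                   + w (X (Suc n)) / (\<Sum>j\<in>{1..Suc n}. w (X j)) \<ge> \<alpha>"
  shows "(INF y. alpha_hat w H V n X Y alpha_t y) \<ge> \<alpha>"
proof (rule cINF_greatest)
  show "UNIV \<noteq> {}" by simp
  fix y
  define Vs where "Vs = (\<lambda>j. V (X j, Y j))"
  define u where "u = V (X (Suc n), y)"
  define W where "W = (\<Sum>j\<in>{1..Suc n}. w (X j))"
  define f where "f = (\<lambda>c::ereal. \<lambda>j. if j \<le> n then ereal (Vs j) else c)"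
  define q where "q = (\<lambda>i c. wquantile alpha_t (pH H n X i) (f c) {1..Suc n})"
  define vbar where "vbar = q (Suc n) \<infinity>"
  have Wpos: "W > 0" unfolding W_def using w_pos by (intro sum_pos) auto
  have cw: "w (X i) / W \<ge> 0" for i using Wpos w_pos[of "X i"] by simp
  have pHnn: "pH H n X i j \<ge> 0" for i j
    unfolding pH_def using H_range by (intro divide_nonneg_nonneg sum_nonneg) auto
  have qmono: "c \<le> c' \<Longrightarrow> q i c \<le> q i c'" for i c c'
    unfolding q_def f_def by (rule wq_mono) (auto simp: pHnn)
  have S_eq: "(\<lambda>j. ereal (if j \<le> n then V (X j, Y j) else V (X (Suc n), y))) = f (ereal u)"
    unfolding f_def Vs_def u_def by auto
  have ah: "alpha_hat w H V n X Y alpha_t y =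
     (\<Sum>i\<in>{1..n}. w (X i) / W * (if ereal (Vs i) \<le> q i (ereal u) then 1 else 0))
     + w (X (Suc n)) / W * (if ereal u \<le> q (Suc n) (ereal u) then 1 else 0)"
  proof -
    have "alpha_hat w H V n X Y alpha_t y =
      (\<Sum>i\<in>{1..Suc n}. w (X i) / W * (if f (ereal u) i \<le> q i (ereal u) then 1 else 0))"
      unfolding alpha_hat_def Let_def q_def W_def
      by (simp only: S_eq) (simp add: f_def Vs_def u_def)
    also have "\<dots> = (\<Sum>i\<in>{1..n}. w (X i) / W * (if f (ereal u) i \<le> q i (ereal u) then 1 else 0))
       + w (X (Suc n)) / W * (if f (ereal u) (Suc n) \<le> q (Suc n) (ereal u) then 1 else 0)"
      by simp
    also have "\<dots> = (\<Sum>i\<in>{1..n}. w (X i) / W * (if ereal (Vs i) \<le> q i (ereal u) then 1 else 0))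
     + w (X (Suc n)) / W * (if ereal u \<le> q (Suc n) (ereal u) then 1 else 0)"
      by (simp add: f_def)
    finally show ?thesis .
  qed
  have c1: "\<alpha> \<le> (\<Sum>i\<in>{1..n}. w (X i) / W * (if ereal (Vs i) \<le> q i vbar then 1 else 0))"
    using cond1 unfolding Let_def vbar_def q_def f_def W_def Vs_def by simp
  have c2: "\<alpha> \<le> (\<Sum>i\<in>{1..n}. w (X i) / W * (if ereal (Vs i) \<le> q i 0 then 1 else 0))
       + w (X (Suc n)) / W"
    using cond2 unfolding Let_def q_def f_def W_def Vs_def by (simp add: zero_ereal_def)
  show "\<alpha> \<le> alpha_hat w H V n X Y alpha_t y"
  proof (cases "ereal u \<le> q (Suc n) (ereal u)")
    case True
    have u0: "0 \<le> ereal u" unfolding u_def using V_nonneg by simp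
    have "(\<Sum>i\<in>{1..n}. w (X i) / W * (if ereal (Vs i) \<le> q i 0 then 1 else 0))
       \<le> (\<Sum>i\<in>{1..n}. w (X i) / W * (if ereal (Vs i) \<le> q i (ereal u) then 1 else 0))"
      apply (rule sum_mono) using qmono[OF u0] cw order_trans by fastforce
    with c2 True show ?thesis unfolding ah by simp
  next
    case False
    hence "ereal u > q (Suc n) (ereal u)" by simp
    hence vb: "vbar \<le> ereal u" unfolding vbar_def q_def f_def by (rule wq_inf)
    have "(\<Sum>i\<in>{1..n}. w (X i) / W * (if ereal (Vs i) \<le> q i vbar then 1 else 0))
       \<le> (\<Sum>i\<in>{1..n}. w (X i) / W * (if ereal (Vs i) \<le> q i (ereal u) then 1 else 0))"
      apply (rule sum_mono) using qmono[OF vb] cw order_trans by fastforce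
    with c1 False show ?thesis unfolding ah by simp
  qed
qed

end
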